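(* Consider $K\ge2$ arms and the quantities in the context, with $0<\alpha\le 8$ and $T\ge\max\{40/\alpha+1,40\}K$. Then for every real $k$ with $0\le k<\Lambda$, \[ \Pr\Big(\sum_{i=1}^K\tau_{i,\Lambda-k}\le T\Big)\ge 1-\exp(-40k/\alpha). \]
   Context: Arm $i\in[K]$ has reward distribution $\mathcal{D}_i$ on $[0,1]$ with mean $\theta_i$; $\theta\in(0,1)$ is a threshold and $\Delta_i=|\theta_i-\theta|$ (convention $\ln(1/0)=+\infty$). For each $i$, $X_{i,1},X_{i,2},\dots$ are i.i.d. from $\mathcal{D}_i$, independent across arms; $\hat\Delta_{i,t}=|\frac1t\sum_{s\le t}X_{i,s}-\theta|$, $\xi_{i,t}=\alpha t\hat\Delta_{i,t}^2+0.5\ln t$, and for $C>0$, $\tau_{i,C}$ is the smallest positive integer $t$ with $\xi_{i,t}>C$. $M=\max\{40/\alpha+1,40\}$; $g_i(x)=e^{2x}$ if $x\le\ln\Delta_i^{-1}$ and $g_i(x)=\frac{x-\ln\Delta_i^{-1}+\alpha}{\alpha\Delta_i^2}$ otherwise; $\Lambda$ is the unique $x\ge0$ with $\sum_{i=1}^Kg_i(x)=T/M$. *)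

theory Defs
  imports "HOL-Probability.Probability"
begin

text \<open>Y s = s-th sample (s \<ge> 1) of one arm, th = threshold, al = alpha.\<close>

definition hatDelta :: "(nat \<Rightarrow> 'a \<Rightarrow> real) \<Rightarrow> real \<Rightarrow> nat \<Rightarrow> 'a \<Rightarrow> real" where
  "hatDelta Y th t \<omega> = \<bar>(\<Sum>s=1..t. Y s \<omega>) / real t - th\<bar>"

definition xi :: "(nat \<Rightarrow> 'a \<Rightarrow> real) \<Rightarrow> real \<Rightarrow> real \<Rightarrow> nat \<Rightarrow> 'a \<Rightarrow> real" where
  "xi Y th al t \<omega> = al * real t * (hatDelta Y th t \<omega>)\<^sup>2 + 0.5 * ln (real t)"

definition tau :: "(nat \<Rightarrow> 'a \<Rightarrow> real) \<Rightarrow> real \<Rightarrow> real \<Rightarrow> real \<Rightarrow> 'a \<Rightarrow> nat" where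
  "tau Y th al C \<omega> = (LEAST t::nat. 0 < t \<and> xi Y th al t \<omega> > C)"

definition Mconst :: "real \<Rightarrow> real" where
  "Mconst al = max (40 / al + 1) 40"

text \<open>g_i with Delta_i = D; the case D = 0 corresponds to ln(1/0) = +infinity.\<close>
definition gfun :: "real \<Rightarrow> real \<Rightarrow> real \<Rightarrow> real" where
  "gfun al D x = (if D = 0 \<or> x \<le> ln (1 / D) then exp (2 * x)
                  else (x - ln (1 / D) + al) / (al * D\<^sup>2))"

definition Lambda :: "real \<Rightarrow> real \<Rightarrow> (nat \<Rightarrow> real) \<Rightarrow> nat \<Rightarrow> real \<Rightarrow> real" where
  "Lambda al th mu K T =
     (THE x. 0 \<le> x \<and> (\<Sum>i<K. gfun al \<bar>mu i - th\<bar> x) = T / Mconst al)"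

end

theory Submission
  imports Defs
begin

lemma xi_big:
  assumes "al > 0" "0 < t" "C < 0.5 * ln (real t)"
  shows "C < xi Y th al t \<omega>"
proof -
  have "al * real t * (hatDelta Y th t \<omega>)\<^sup>2 \<ge> 0" using assms by simp
  thus ?thesis using assms unfolding xi_def by linarith
qed

lemma ln_gt_of_exp_lt: "real t > exp (2*C) \<Longrightarrow> C < 0.5 * ln (real t)" 
proof -
  assume "real t > exp (2*C)"
  hence "ln (exp (2*C)) < ln (real t)"
    using exp_gt_zero[of "2*C"] by (subst ln_less_cancel_iff) linarith+
  hence "2*C < ln (real t)" by (simp only: ln_exp)
  thus ?thesis by linarith
qed

lemma exists_big_t: "\<exists>t::nat. 0 < t \<and> C < 0.5 * ln (real t)"
proof (intro exI conjI)
  have a1: "exp (2*C) \<le> real (nat \<lceil>exp (2*C)\<rceil>)" by (rule real_nat_ceiling_ge)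
  have a2: "real (nat \<lceil>exp (2*C)\<rceil> + 1) > exp (2*C)" using a1 unfolding of_nat_add of_nat_1 by linarith
  show "C < 0.5 * ln (real (nat \<lceil>exp (2*C)\<rceil> + 1))" by (rule ln_gt_of_exp_lt[OF a2])
  show "0 < (nat \<lceil>exp (2*C)\<rceil> + 1)" by simp
qed
lemma tau_witness:
  assumes "al > 0"
  shows "\<exists>t. 0 < t \<and> xi Y th al t \<omega> > C"
proof -
  obtain t :: nat where t: "0 < t" "C < 0.5 * ln (real t)" using exists_big_t by blast
  have "C < xi Y th al t \<omega>" by (rule xi_big[OF assms t])
  with t(1) show ?thesis by blast
qed

lemma tau_gt_iff:
  assumes "al > 0"
  shows "n < tau Y th al C \<omega> \<longleftrightarrow> (\<forall>t. 0 < t \<and> t \<le> n \<longrightarrow> xi Y th al t \<omega> \<le> C)"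
proof
  assume h: "n < tau Y th al C \<omega>"
  show "\<forall>t. 0 < t \<and> t \<le> n \<longrightarrow> xi Y th al t \<omega> \<le> C"
  proof (intro allI impI)
    fix t assume "0 < t \<and> t \<le> n"
    hence "t < tau Y th al C \<omega>" using h by simp
    hence "\<not> (0 < t \<and> xi Y th al t \<omega> > C)" unfolding tau_def using not_less_Least by blast
    thus "xi Y th al t \<omega> \<le> C" using \<open>0 < t \<and> t \<le> n\<close> by simp
  qed
next
  assume h: "\<forall>t. 0 < t \<and> t \<le> n \<longrightarrow> xi Y th al t \<omega> \<le> C"
  have w: "0 < tau Y th al C \<omega> \<and> xi Y th al (tau Y th al C \<omega>) \<omega> > C"
    unfolding tau_def using tau_witness[OF assms] by (rule LeastI_ex)
  show "n < tau Y th al C \<omega>"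
  proof (rule ccontr)
    assume "\<not> n < tau Y th al C \<omega>"
    hence "tau Y th al C \<omega> \<le> n" by simp
    hence "xi Y th al (tau Y th al C \<omega>) \<omega> \<le> C" using h w by blast
    thus False using w by linarith
  qed
qed

lemma tau_pos:
  assumes "al > 0" shows "0 < tau Y th al C \<omega>"
  unfolding tau_def by (rule conjunct1[OF LeastI_ex[OF tau_witness[OF assms]]])

lemma tau_le:
  assumes "al > 0" "0 < N" "C < 0.5 * ln (real N)"
  shows "tau Y th al C \<omega> \<le> N"
  unfolding tau_def by (rule Least_le) (use xi_big[OF assms] assms(2) in auto)

lemma tau_cong:
  assumes "al > 0" "0 < N" "C < 0.5 * ln (real N)"
    and "\<And>s. 1 \<le> s \<Longrightarrow> s \<le> N \<Longrightarrow> Y s \<omega> = Y' s \<omega>'"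
  shows "tau Y th al C \<omega> = tau Y' th al C \<omega>'"
proof -
  have xe: "xi Y th al t \<omega> = xi Y' th al t \<omega>'" if "t \<le> N" for t
    using assms(4) that unfolding xi_def hatDelta_def by (auto intro!: sum.cong)
  have "n < tau Y th al C \<omega> \<longleftrightarrow> n < tau Y' th al C \<omega>'" if "n < N" for n
    unfolding tau_gt_iff[OF assms(1)] using xe that by auto
  moreover have "tau Y th al C \<omega> \<le> N" "tau Y' th al C \<omega>' \<le> N"
    using tau_le[OF assms(1-3), of Y th \<omega>] tau_le[OF assms(1-3), of Y' th \<omega>'] by auto
  ultimately show ?thesis
  proof -
    assume eq: "\<And>n. n < N \<Longrightarrow> (n < tau Y th al C \<omega>) = (n < tau Y' th al C \<omega>')"
      and le: "tau Y th al C \<omega> \<le> N" "tau Y' th al C \<omega>' \<le> N"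
    show ?thesis
    proof (rule linorder_cases[of "tau Y th al C \<omega>" "tau Y' th al C \<omega>'"])
      assume h: "tau Y th al C \<omega> < tau Y' th al C \<omega>'"
      thus ?thesis using eq[of "tau Y th al C \<omega>"] le by simp
    next
      assume h: "tau Y' th al C \<omega>' < tau Y th al C \<omega>"
      thus ?thesis using eq[of "tau Y' th al C \<omega>'"] le by simp
    qed
  qed
qed

lemma tau_sum_repr:
  assumes "al > 0" "0 < N" "C < 0.5 * ln (real N)"
  shows "real (tau Y th al C \<omega>) =
     (\<Sum>n<N. if (\<forall>t\<in>{1..n}. xi Y th al t \<omega> \<le> C) then 1 else 0)"
proof -
  have "(\<Sum>n<N. if (\<forall>t\<in>{1..n}. xi Y th al t \<omega> \<le> C) then 1 else (0::real))
      = (\<Sum>n<N. if n < tau Y th al C \<omega> then 1 else 0)"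
    by (intro sum.cong refl) (auto simp: tau_gt_iff[OF assms(1)])
  also have "\<dots> = real (card {n. n < N \<and> n < tau Y th al C \<omega>})"
    by (simp add: sum.If_cases Int_def)
  also have "{n. n < N \<and> n < tau Y th al C \<omega>} = {..<tau Y th al C \<omega>}"
    using tau_le[OF assms, of Y th \<omega>] by auto
  finally show ?thesis unfolding card_lessThan by (rule sym)
qed


lemma exp_two_ln_inv: "(D::real) > 0 \<Longrightarrow> exp (2 * ln (1 / D)) = 1 / D\<^sup>2"
proof -
  assume D: "D > 0"
  have "exp (2 * ln (1 / D)) = exp (ln (1/D) + ln (1/D))"
    by simp
  also have "\<dots> = exp (ln (1/D)) * exp (ln (1/D))" by (rule exp_add)
  also have "\<dots> = (1/D) * (1/D)" using D by simp
  finally show ?thesis by (simp add: power2_eq_square)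
qed

lemma gfun_pos: "al > 0 \<Longrightarrow> D \<ge> 0 \<Longrightarrow> gfun al D x > 0"
  unfolding gfun_def by (auto intro!: divide_pos_pos)

lemma gfun_lin: "D > 0 \<Longrightarrow> \<not> x \<le> ln (1 / D) \<Longrightarrow> gfun al D x = (x - ln (1 / D) + al) / (al * D\<^sup>2)"
  unfolding gfun_def by simp

lemma gfun_exp: "D = 0 \<or> x \<le> ln (1 / D) \<Longrightarrow> gfun al D x = exp (2 * x)"
  unfolding gfun_def by simp

lemma gfun_strict_mono:
  assumes al: "al > 0" and D0: "D \<ge> 0" and xy: "x < y"
  shows "gfun al D x < gfun al D y"
proof (cases "D = 0")
  case True thus ?thesis using xy by (simp add: gfun_def)
next
  case False
  hence Dp: "D > 0" using D0 by simp
  define L where "L = ln (1 / D)"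
  have D2: "D\<^sup>2 > 0" using Dp by simp
  have adp: "al * D\<^sup>2 > 0" using al D2 by simp
  show ?thesis
  proof (cases "y \<le> L")
    case True
    hence "x \<le> L" using xy by simp
    hence "gfun al D x = exp (2*x)" "gfun al D y = exp (2*y)"
      using True by (auto intro!: gfun_exp simp: L_def)
    thus ?thesis using xy by simp
  next
    case ny: False
    have gy: "gfun al D y = (y - L + al) / (al * D\<^sup>2)" using gfun_lin[OF Dp] ny by (simp add: L_def)
    show ?thesis
    proof (cases "x \<le> L")
      case True
      have "gfun al D x = exp (2*x)" using True by (auto intro!: gfun_exp simp: L_def)
      also have "\<dots> \<le> exp (2*L)" using True by simp
      also have "\<dots> = 1 / D\<^sup>2" unfolding L_def by (rule exp_two_ln_inv[OF Dp])
      also have "\<dots> = al / (al * D\<^sup>2)" using al by simp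
      also have "\<dots> < (y - L + al) / (al * D\<^sup>2)"
        using ny adp by (intro divide_strict_right_mono) auto
      finally show ?thesis using gy by simp
    next
      case False
      have gx: "gfun al D x = (x - L + al) / (al * D\<^sup>2)" using gfun_lin[OF Dp] False by (simp add: L_def)
      show ?thesis unfolding gx gy using xy adp by (intro divide_strict_right_mono) auto
    qed
  qed
qed

lemma gfun_cont:
  assumes al: "al > 0" and D0: "D \<ge> 0"
  shows "continuous_on UNIV (gfun al D)"
proof (cases "D = 0")
  case True
  hence "gfun al D = (\<lambda>x. exp (2 * x))" by (auto simp: gfun_def)
  thus ?thesis by (auto intro!: continuous_intros)
next
  case False
  hence Dp: "D > 0" using D0 by simp
  define L where "L = ln (1 / D)"
  have eq: "gfun al D = (\<lambda>x. if x \<le> L then exp (2*x) else (x - L + al) / (al * D\<^sup>2))"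
    using False by (auto simp: gfun_def L_def fun_eq_iff)
  have U: "UNIV = {..L} \<union> {L..}" by auto
  have "continuous_on ({..L} \<union> {L..}) (\<lambda>x. if x \<le> L then exp (2*x) else (x - L + al) / (al * D\<^sup>2))"
  proof (rule continuous_on_If)
    show "continuous_on {..L} (\<lambda>x. exp (2*x))" by (auto intro!: continuous_intros)
    show "continuous_on {L..} (\<lambda>x. (x - L + al) / (al * D\<^sup>2))" using al Dp by (auto intro!: continuous_intros)
    fix x assume "x \<in> {L..}" "x \<le> L"
    hence x: "x = L" by simp
    have "exp (2*L) = 1 / D\<^sup>2" unfolding L_def by (rule exp_two_ln_inv[OF Dp])
    also have "\<dots> = (L - L + al) / (al * D\<^sup>2)" using al by simp
    finally show "exp (2*x) = (x - L + al) / (al * D\<^sup>2)" using x by simp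
  qed auto
  thus ?thesis using U eq by simp
qed

lemma gfun_ge_lin:
  assumes al: "al > 0" "al \<le> 8" and D: "0 \<le> D" "D \<le> 1" and x: "x \<ge> 0"
  shows "gfun al D x \<ge> x / 16"
proof (cases "D = 0 \<or> x \<le> ln (1 / D)")
  case True
  hence "gfun al D x = exp (2*x)" by (rule gfun_exp)
  moreover have "exp (2*x) \<ge> 1 + 2*x" by (rule exp_ge_add_one_self)
  ultimately show ?thesis using x by linarith
next
  case False
  hence Dp: "D > 0" and nx: "\<not> x \<le> ln (1/D)" using D by auto
  define L where "L = ln (1 / D)"
  have L0: "L \<ge> 0" unfolding L_def using Dp D by simp
  have g: "gfun al D x = (x - L + al) / (al * D\<^sup>2)" using gfun_lin[OF Dp nx] by (simp add: L_def)
  have D2: "D\<^sup>2 \<le> 1" "D\<^sup>2 > 0" using D Dp by (auto simp: power_le_one)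
  have "(x - L + al) / (al * D\<^sup>2) = ((x - L + al) / al) * (1 / D\<^sup>2)" by simp
  have e: "1 / D\<^sup>2 = exp (2 * L)" unfolding L_def by (rule exp_two_ln_inv[OF Dp, symmetric])
  have e1: "exp (2 * L) \<ge> 1 + 2 * L" by (rule exp_ge_add_one_self)
  have xl: "x > L" using nx L_def by simp
  have q: "(x - L + al) / al \<ge> 1" using xl al by simp
  have q2: "(x - L + al) / al \<ge> (x - L) / 8"
  proof -
    have "(x - L) / 8 \<le> (x - L) / al" using xl al by (intro divide_left_mono) auto
    also have "\<dots> \<le> (x - L + al) / al" using al by (intro divide_right_mono) auto
    finally show ?thesis .
  qed
  have "gfun al D x = ((x - L + al) / al) * exp (2 * L)" unfolding g e[symmetric] by simp
  moreover have "((x - L + al) / al) * exp (2 * L) \<ge> x / 16"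
  proof (cases "L \<ge> x / 2")
    case True
    have "((x - L + al) / al) * exp (2 * L) \<ge> 1 * exp (2 * L)"
      using q by (intro mult_right_mono) auto
    thus ?thesis using e1 True x by linarith
  next
    case False
    have "((x - L + al) / al) * exp (2 * L) \<ge> ((x - L) / 8) * 1"
      using q2 q e1 L0 xl by (intro mult_mono) auto
    hence h1: "((x - L + al) / al) * exp (2 * L) \<ge> (x - L) / 8" by simp
    have h2: "(x - L) / 8 \<ge> x / 16" using False by (simp add: field_simps)
    show ?thesis using h1 h2 by linarith
  qed
  ultimately show ?thesis by simp
qed

lemma gfun_zero: "0 \<le> D \<Longrightarrow> D \<le> 1 \<Longrightarrow> gfun al D 0 = 1"
  by (cases "D = 0") (auto simp: gfun_def)

lemma Lambda_prop:
  assumes al: "al > 0" "al \<le> 8" and K: "K > 0"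
    and D: "\<And>i. i < K \<Longrightarrow> \<bar>mu i - th\<bar> \<le> 1"
    and T: "real K \<le> T' / Mconst al"
  shows "0 \<le> Lambda al th mu K T' \<and>
         (\<Sum>i<K. gfun al \<bar>mu i - th\<bar> (Lambda al th mu K T')) = T' / Mconst al"
proof -
  define G where "G = (\<lambda>x. \<Sum>i<K. gfun al \<bar>mu i - th\<bar> x)"
  have Gmono: "G x < G y" if "x < y" for x y
    unfolding G_def using K by (intro sum_strict_mono gfun_strict_mono al that) auto
  have Gcont: "continuous_on {a..b} G" for a b
    unfolding G_def
    by (intro continuous_on_sum continuous_on_subset[OF gfun_cont[OF al(1)]]) auto
  have G0: "G 0 = real K" unfolding G_def using D by (simp add: gfun_zero)
  define b where "b = 16 * (T' / Mconst al)"
  have b0: "b \<ge> 0" unfolding b_def using T by simp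
  have "G b \<ge> gfun al \<bar>mu 0 - th\<bar> b"
    unfolding G_def using K al by (intro member_le_sum gfun_pos[THEN less_imp_le]) auto
  moreover have "gfun al \<bar>mu 0 - th\<bar> b \<ge> b / 16"
    using al D[OF K] b0 by (intro gfun_ge_lin) auto
  ultimately have Gb: "G b \<ge> T' / Mconst al" unfolding b_def by simp
  obtain x where x: "0 \<le> x" "x \<le> b" "G x = T' / Mconst al"
    using IVT'[of G 0 "T' / Mconst al" b, OF _ Gb b0 Gcont] G0 T by auto
  have ex: "\<exists>!x. 0 \<le> x \<and> G x = T' / Mconst al"
  proof
    show "0 \<le> x \<and> G x = T' / Mconst al" using x by simp
    fix y assume y: "0 \<le> y \<and> G y = T' / Mconst al"
    show "y = x"
    proof (rule ccontr)
      assume "y \<noteq> x"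
      hence "y < x \<or> x < y" by auto
      thus False using Gmono[of y x] Gmono[of x y] x y by auto
    qed
  qed
  have "0 \<le> (THE x. 0 \<le> x \<and> G x = T' / Mconst al) \<and> G (THE x. 0 \<le> x \<and> G x = T' / Mconst al) = T' / Mconst al"
    by (rule theI'[OF ex])
  thus ?thesis unfolding Lambda_def G_def .
qed


lemma (in prob_space) hoeff_arm:
  fixes Y :: "nat \<Rightarrow> 'a \<Rightarrow> real"
  assumes meas: "\<And>s. s \<ge> 1 \<Longrightarrow> Y s \<in> borel_measurable M"
    and bnd: "\<And>s \<omega>. s \<ge> 1 \<Longrightarrow> \<omega> \<in> space M \<Longrightarrow> Y s \<omega> \<in> {0..1}"
    and ind: "indep_vars (\<lambda>_. borel) Y {1..n}"
    and dist: "\<And>s. s \<ge> 1 \<Longrightarrow> distr M borel (Y s) = distr M borel (Y 1)"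
    and n: "n \<ge> 1" and e: "\<epsilon> \<ge> 0"
  shows "prob {\<omega>\<in>space M. (\<Sum>s\<in>{1..n}. Y s \<omega>) / real n \<le> expectation (Y 1) - \<epsilon>} \<le> exp (-2 * real n * \<epsilon>\<^sup>2)"
    and "prob {\<omega>\<in>space M. (\<Sum>s\<in>{1..n}. Y s \<omega>) / real n \<ge> expectation (Y 1) + \<epsilon>} \<le> exp (-2 * real n * \<epsilon>\<^sup>2)"
proof -
  interpret H: Hoeffding_ineq_iid M "{1..n}" Y "Y 1" 0 1 "expectation (Y 1)"
  proof unfold_locales
    show "AE x in M. Y 1 x \<in> {0..1}" using bnd[of 1] by (intro AE_I2) auto
    show "finite {1..n}" by simp
    show "indep_vars (\<lambda>_. borel) Y {1..n}" by (rule ind)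
    show "random_variable borel (Y 1)" by (rule meas) simp
    fix i assume "i \<in> {1..n}"
    thus "distr M borel (Y i) = distr M borel (Y 1)" by (intro dist) simp
  qed (rule Pure.reflexive)
  have ne: "{1..n} \<noteq> {}" using n by auto
  show "prob {\<omega>\<in>space M. (\<Sum>s\<in>{1..n}. Y s \<omega>) / real n \<le> expectation (Y 1) - \<epsilon>} \<le> exp (-2 * real n * \<epsilon>\<^sup>2)"
    using H.Hoeffding_ineq_le'[OF e _ ne] by simp
  show "prob {\<omega>\<in>space M. (\<Sum>s\<in>{1..n}. Y s \<omega>) / real n \<ge> expectation (Y 1) + \<epsilon>} \<le> exp (-2 * real n * \<epsilon>\<^sup>2)"
    using H.Hoeffding_ineq_ge'[OF e _ ne] by simp
qed


lemma (in prob_space) arm_tail: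
  fixes Y :: "nat \<Rightarrow> 'a \<Rightarrow> real"
  assumes meas: "\<And>s. s \<ge> 1 \<Longrightarrow> Y s \<in> borel_measurable M"
    and bnd: "\<And>s \<omega>. s \<ge> 1 \<Longrightarrow> \<omega> \<in> space M \<Longrightarrow> Y s \<omega> \<in> {0..1}"
    and ind: "\<And>n. indep_vars (\<lambda>_. borel) Y {1..n}"
    and dist: "\<And>s. s \<ge> 1 \<Longrightarrow> distr M borel (Y s) = distr M borel (Y 1)"
    and mu: "expectation (Y 1) = mu"
    and al: "al > 0" and D: "D = \<bar>mu - th\<bar>" "D > 0"
    and n: "n \<ge> 1" and n1: "real n \<ge> 1 / D\<^sup>2"
    and n2: "real n * (al * D\<^sup>2) \<ge> 16 * (C - ln (1 / D))"
  shows "prob {\<omega>\<in>space M. n < tau Y th al C \<omega>} \<le> exp (-(9/8) * D\<^sup>2 * real n)"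
proof -
  define L where "L = ln (1 / D)"
  define S where "S = (\<lambda>\<omega>. (\<Sum>s\<in>{1..n}. Y s \<omega>) / real n)"
  have Sm[measurable]: "S \<in> borel_measurable M"
    unfolding S_def by (intro borel_measurable_divide borel_measurable_sum meas borel_measurable_const) auto
  have np: "real n > 0" using n by simp
  have lnn: "ln (real n) \<ge> 2 * L"
  proof -
    have "exp (2 * L) = 1 / D\<^sup>2" unfolding L_def by (rule exp_two_ln_inv[OF D(2)])
    hence "exp (2 * L) \<le> real n" using n1 by simp
    hence "ln (exp (2 * L)) \<le> ln (real n)" using np by (subst ln_le_cancel_iff) auto
    thus ?thesis by simp
  qed
  have sub: "hatDelta Y th n \<omega> \<le> D / 4" if "\<omega> \<in> space M" "n < tau Y th al C \<omega>" for \<omega>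
  proof -
    define h where "h = hatDelta Y th n \<omega>"
    have "xi Y th al n \<omega> \<le> C" using that(2) n unfolding tau_gt_iff[OF al] by auto
    hence "al * real n * h\<^sup>2 + 0.5 * ln (real n) \<le> C" unfolding xi_def h_def .
    hence "al * real n * h\<^sup>2 \<le> C - L" using lnn by linarith
    also have "\<dots> \<le> al * real n * (D / 4)\<^sup>2" using n2 unfolding L_def by (simp add: power2_eq_square field_simps)
    finally have "h\<^sup>2 \<le> (D / 4)\<^sup>2" using al np by (simp add: mult_le_cancel_left_pos)
    moreover have "0 \<le> D / 4" using D by simp
    ultimately show ?thesis unfolding h_def by (rule power2_le_imp_le)
  qed
  have hd: "hatDelta Y th n \<omega> = \<bar>S \<omega> - th\<bar>" for \<omega> unfolding hatDelta_def S_def ..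
  show ?thesis
  proof (cases "mu > th")
    case True
    hence Dm: "D = mu - th" using D by simp
    have "{\<omega>\<in>space M. n < tau Y th al C \<omega>} \<subseteq> {\<omega>\<in>space M. S \<omega> \<le> expectation (Y 1) - 3 * D / 4}"
    proof safe
      fix \<omega> assume "\<omega> \<in> space M" "n < tau Y th al C \<omega>"
      from sub[OF this] hd[of \<omega>] have "\<bar>S \<omega> - th\<bar> \<le> D / 4" by simp
      hence "S \<omega> - th \<le> D / 4" using abs_ge_self[of "S \<omega> - th"] by linarith
      thus "S \<omega> \<le> expectation (Y 1) - 3 * D / 4" using Dm mu by linarith
    qed
    hence "prob {\<omega>\<in>space M. n < tau Y th al C \<omega>} \<le> prob {\<omega>\<in>space M. S \<omega> \<le> expectation (Y 1) - 3 * D / 4}"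
      by (intro finite_measure_mono) measurable
    also have "\<dots> \<le> exp (-2 * real n * (3 * D / 4)\<^sup>2)"
      unfolding S_def using D by (intro hoeff_arm(1)[OF meas bnd ind dist n]) auto
    also have "\<dots> = exp (-(9/8) * D\<^sup>2 * real n)" by (simp add: power2_eq_square)
    finally show ?thesis .
  next
    case False
    hence Dm: "D = th - mu" using D by simp
    have "{\<omega>\<in>space M. n < tau Y th al C \<omega>} \<subseteq> {\<omega>\<in>space M. S \<omega> \<ge> expectation (Y 1) + 3 * D / 4}"
    proof safe
      fix \<omega> assume "\<omega> \<in> space M" "n < tau Y th al C \<omega>"
      from sub[OF this] hd[of \<omega>] have "\<bar>S \<omega> - th\<bar> \<le> D / 4" by simp
      hence "th - S \<omega> \<le> D / 4" using abs_ge_minus_self[of "S \<omega> - th"] by linarith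
      thus "S \<omega> \<ge> expectation (Y 1) + 3 * D / 4" using Dm mu by linarith
    qed
    hence "prob {\<omega>\<in>space M. n < tau Y th al C \<omega>} \<le> prob {\<omega>\<in>space M. S \<omega> \<ge> expectation (Y 1) + 3 * D / 4}"
      by (intro finite_measure_mono) measurable
    also have "\<dots> \<le> exp (-2 * real n * (3 * D / 4)\<^sup>2)"
      unfolding S_def using D by (intro hoeff_arm(2)[OF meas bnd ind dist n]) auto
    also have "\<dots> = exp (-(9/8) * D\<^sup>2 * real n)" by (simp add: power2_eq_square)
    finally show ?thesis .
  qed
qed


lemma exp_minus_one_le3: 
  fixes x :: real assumes "0 \<le> x" "x \<le> 1" shows "exp x - 1 \<le> 3 * x"
proof -
  have a: "exp (-x) \<ge> 1 - x" using exp_ge_add_one_self[of "-x"] by simp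
  have b: "exp x * exp (-x) = 1" by (simp add: exp_minus_inverse)
  have "exp x * (1 - x) \<le> exp x * exp (-x)" using a by (intro mult_left_mono) auto
  hence c: "exp x - 1 \<le> x * exp x" using b by (simp add: algebra_simps)
  have "exp x \<le> exp 1" using assms by simp
  hence "exp x \<le> 3" using exp_le by linarith
  hence "x * exp x \<le> x * 3" using assms by (intro mult_left_mono) auto
  thus ?thesis using c by linarith
qed

lemma geom_partial:
  fixes q :: real
  shows "N \<ge> 1 \<Longrightarrow> (1 - q) * (\<Sum>n\<in>{1..<N}. q ^ n) = q - q ^ N"
proof (induction N)
  case 0 thus ?case by simp
next
  case (Suc N)
  show ?case
  proof (cases "N = 0")
    case True thus ?thesis by simp
  next
    case False
    hence IH: "(1 - q) * (\<Sum>n\<in>{1..<N}. q ^ n) = q - q ^ N" using Suc by simp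
    have "(\<Sum>n\<in>{1..<Suc N}. q ^ n) = (\<Sum>n\<in>{1..<N}. q ^ n) + q ^ N"
      using False by simp
    hence "(1 - q) * (\<Sum>n\<in>{1..<Suc N}. q ^ n) = (1 - q) * (\<Sum>n\<in>{1..<N}. q ^ n) + (1 - q) * q ^ N"
      by (simp add: algebra_simps)
    also have "\<dots> = q - q ^ Suc N" using IH by (simp add: algebra_simps)
    finally show ?thesis .
  qed
qed

lemma geom_exp_bound:
  fixes x :: real assumes x: "x > 0"
  shows "(\<Sum>n\<in>{1..<N}. exp (- x * real n)) \<le> 1 / x"
proof (cases "N \<ge> 1")
  case False
  hence "N = 0" by simp
  thus ?thesis using x by simp
next
  case True
  define q where "q = exp (- x)"
  have eq: "exp (- x * real n) = q ^ n" for n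
    unfolding q_def using exp_of_nat_mult[of n "-x"] by (simp add: mult.commute)
  have S: "(\<Sum>n\<in>{1..<N}. exp (- x * real n)) = (\<Sum>n\<in>{1..<N}. q ^ n)" using eq by simp
  have q0: "q > 0" unfolding q_def by simp
  have "(1 - q) * (\<Sum>n\<in>{1..<N}. q ^ n) \<le> q" using geom_partial[OF True, of q] q0 by simp
  hence h1: "exp x * ((1 - q) * (\<Sum>n\<in>{1..<N}. q ^ n)) \<le> exp x * q" by (intro mult_left_mono) auto
  have eq1: "exp x * q = 1" unfolding q_def by (simp add: exp_minus_inverse)
  have "exp x * ((1 - q) * (\<Sum>n\<in>{1..<N}. q ^ n)) = exp x * (\<Sum>n\<in>{1..<N}. q ^ n) - (exp x * q) * (\<Sum>n\<in>{1..<N}. q ^ n)"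
    by (simp add: algebra_simps)
  also have "\<dots> = (exp x - 1) * (\<Sum>n\<in>{1..<N}. q ^ n)" unfolding eq1 by (simp add: algebra_simps)
  finally have eq2: "exp x * ((1 - q) * (\<Sum>n\<in>{1..<N}. q ^ n)) = (exp x - 1) * (\<Sum>n\<in>{1..<N}. q ^ n)" .
  have "(exp x - 1) * (\<Sum>n\<in>{1..<N}. q ^ n) \<le> 1" using h1 eq1 eq2 by linarith
  moreover have "exp x - 1 \<ge> x" using exp_ge_add_one_self[of x] by linarith
  moreover have "(\<Sum>n\<in>{1..<N}. q ^ n) \<ge> 0" using q0 by (intro sum_nonneg) auto
  ultimately have "x * (\<Sum>n\<in>{1..<N}. q ^ n) \<le> 1"
    by (meson dual_order.trans mult_right_mono)
  hence "(\<Sum>n\<in>{1..<N}. q ^ n) \<le> 1 / x" using x by (simp add: field_simps)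
  thus ?thesis using S by simp
qed

lemma exp_telescope:
  fixes lam :: real
  assumes "1 \<le> t" "t \<le> N"
  shows "exp (lam * real t) = exp lam + (\<Sum>n\<in>{1..<N}. (exp (lam * real (n+1)) - exp (lam * real n)) * (if n < t then 1 else 0))"
proof -
  have "(\<Sum>n\<in>{1..<N}. (exp (lam * real (n+1)) - exp (lam * real n)) * (if n < t then 1 else 0))
      = (\<Sum>n\<in>{1..<t}. (exp (lam * real (n+1)) - exp (lam * real n)))"
  proof -
    have "(\<Sum>n\<in>{1..<N}. (exp (lam * real (n+1)) - exp (lam * real n)) * (if n < t then 1 else 0))
       = (\<Sum>n\<in>{1..<N}. if n < t then (exp (lam * real (n+1)) - exp (lam * real n)) else 0)"
      by (intro sum.cong) auto
    also have "\<dots> = (\<Sum>n\<in>{n\<in>{1..<N}. n < t}. (exp (lam * real (n+1)) - exp (lam * real n)))"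
      by (rule sum.inter_filter[symmetric]) simp
    also have "{n\<in>{1..<N}. n < t} = {1..<t}" using assms by auto
    finally show ?thesis .
  qed
  also have "\<dots> = exp (lam * real t) - exp (lam * real 1)"
    using sum_Suc_diff'[OF assms(1), of "\<lambda>n. exp (lam * real n)"] by simp
  finally show ?thesis by simp
qed


lemma aux_factor: "(a::real) * b * cc - b * cc = (a - 1) * b * cc"
  by (simp add: algebra_simps)

lemma (in prob_space) arm_mgf:
  fixes Y :: "nat \<Rightarrow> 'a \<Rightarrow> real"
  assumes meas: "\<And>s. s \<ge> 1 \<Longrightarrow> Y s \<in> borel_measurable M"
    and bnd: "\<And>s \<omega>. s \<ge> 1 \<Longrightarrow> \<omega> \<in> space M \<Longrightarrow> Y s \<omega> \<in> {0..1}"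
    and ind: "\<And>n. indep_vars (\<lambda>_. borel) Y {1..n}"
    and dist: "\<And>s. s \<ge> 1 \<Longrightarrow> distr M borel (Y s) = distr M borel (Y 1)"
    and mu: "expectation (Y 1) = mu"
    and al: "al > 0" and D: "D = \<bar>mu - th\<bar>" "D > 0" "D \<le> 1"
    and taum: "(\<lambda>\<omega>. real (tau Y th al C \<omega>)) \<in> borel_measurable M"
    and N: "0 < N" "C < 0.5 * ln (real N)"
    and k: "0 \<le> k" "k \<le> y" and C: "C = ln (1 / D) + y - k"
    and Mc: "Mc \<ge> 40"
  shows "expectation (\<lambda>\<omega>. exp (D\<^sup>2 * (real (tau Y th al C \<omega>) - Mc * (y + al) / (al * D\<^sup>2))))
           \<le> exp (- 40 * k / al)"
proof -
  define lam where "lam = D\<^sup>2"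
  define r where "r = 9/8 * lam"
  define n0 where "n0 = 1 / lam + 16 * (y - k) / (al * lam)"
  define B where "B = Mc * (y + al) / (al * D\<^sup>2)"
  define tr where "tr = (\<lambda>\<omega>. real (tau Y th al C \<omega>))"
  define E where "E = (\<lambda>n::nat. {\<omega>\<in>space M. real n < tr \<omega>})"
  define c where "c = (\<lambda>n::nat. exp (lam * real (n+1)) - exp (lam * real n))"
  have trm[measurable]: "tr \<in> borel_measurable M" unfolding tr_def by (rule taum)
  have Em: "E n \<in> events" for n unfolding E_def by measurable
  have lam0: "lam > 0" unfolding lam_def using D by simp
  have lam1: "lam \<le> 1" unfolding lam_def using D(2,3) by (intro power_le_one) auto
  have n0a: "n0 \<ge> 1 / lam" unfolding n0_def using k al lam0 by (simp add: divide_nonneg_pos)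
  have n0b: "n0 \<ge> 16 * (y - k) / (al * lam)" unfolding n0_def using lam0 by simp
  have n0p: "n0 \<ge> 0" using n0a lam0 by (meson dual_order.trans less_eq_real_def zero_le_divide_1_iff)
  have r0: "r > 0" unfolding r_def using lam0 by simp
  have tail: "prob (E n) \<le> exp (r * (n0 - real n))" if n1: "n \<ge> 1" for n
  proof (cases "real n \<ge> n0")
    case True
    have e: "E n = {\<omega>\<in>space M. n < tau Y th al C \<omega>}" unfolding E_def tr_def by simp
    have h1: "real n \<ge> 1 / D\<^sup>2" using True n0a unfolding lam_def by simp
    have "real n \<ge> 16 * (y - k) / (al * lam)" using True n0b by simp
    hence "real n * (al * lam) \<ge> 16 * (y - k)" using al lam0 by (simp add: field_simps)
    hence h2: "real n * (al * D\<^sup>2) \<ge> 16 * (C - ln (1 / D))" unfolding lam_def C by simp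
    have "prob (E n) \<le> exp (-(9/8) * D\<^sup>2 * real n)"
      unfolding e by (rule arm_tail[OF meas bnd ind dist mu al D(1,2) n1 h1 h2])
    also have "\<dots> \<le> exp (r * (n0 - real n))" unfolding r_def lam_def using n0p D
      by (simp add: algebra_simps)
    finally show ?thesis .
  next
    case False
    have "prob (E n) \<le> 1" by simp
    also have "1 \<le> exp (r * (n0 - real n))" using False r0 by simp
    finally show ?thesis .
  qed
  have pw: "exp (lam * tr \<omega>) = exp lam + (\<Sum>n\<in>{1..<N}. c n * indicator (E n) \<omega>)" if "\<omega> \<in> space M" for \<omega>
  proof -
    have t1: "1 \<le> tau Y th al C \<omega>" using tau_pos[OF al] by (simp add: Suc_le_eq)
    have t2: "tau Y th al C \<omega> \<le> N" by (rule tau_le[OF al N])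
    have "indicator (E n) \<omega> = (if n < tau Y th al C \<omega> then 1 else (0::real))" for n
      unfolding E_def tr_def using that by (simp add: indicator_def)
    thus ?thesis unfolding tr_def c_def using exp_telescope[OF t1 t2, of lam] by simp
  qed
  have intE: "integrable M (\<lambda>\<omega>. c n * indicator (E n) \<omega>)" for n
    using Em[of n] by (intro integrable_mult_right integrable_real_indicator) (auto simp: emeasure_eq_measure)
  have expE: "expectation (\<lambda>\<omega>. exp (lam * tr \<omega>)) = exp lam + (\<Sum>n\<in>{1..<N}. c n * prob (E n))"
  proof -
    have "expectation (\<lambda>\<omega>. exp (lam * tr \<omega>)) = expectation (\<lambda>\<omega>. exp lam + (\<Sum>n\<in>{1..<N}. c n * indicator (E n) \<omega>))"
      by (rule Bochner_Integration.integral_cong[OF refl]) (rule pw)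
    also have "\<dots> = expectation (\<lambda>\<omega>. exp lam) + expectation (\<lambda>\<omega>. \<Sum>n\<in>{1..<N}. c n * indicator (E n) \<omega>)"
      using intE by (intro Bochner_Integration.integral_add Bochner_Integration.integrable_sum) auto
    also have "expectation (\<lambda>\<omega>. \<Sum>n\<in>{1..<N}. c n * indicator (E n) \<omega>) = (\<Sum>n\<in>{1..<N}. expectation (\<lambda>\<omega>. c n * indicator (E n) \<omega>))"
      using intE by (intro Bochner_Integration.integral_sum) auto
    also have "\<dots> = (\<Sum>n\<in>{1..<N}. c n * prob (E n))"
    proof (intro sum.cong refl)
      fix n
      have "E n \<inter> space M = E n" unfolding E_def by auto
      thus "expectation (\<lambda>\<omega>. c n * indicator (E n) \<omega>) = c n * prob (E n)" by simp
    qed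
    finally show ?thesis by (simp add: prob_space)
  qed
  have c0: "c n \<ge> 0" for n unfolding c_def using lam0 by simp
  have "(\<Sum>n\<in>{1..<N}. c n * prob (E n)) \<le> (\<Sum>n\<in>{1..<N}. c n * exp (r * (n0 - real n)))"
    using tail c0 by (intro sum_mono mult_left_mono) auto
  also have "\<dots> = (\<Sum>n\<in>{1..<N}. (exp lam - 1) * exp (r * n0) * exp (- (lam / 8) * real n))"
  proof (intro sum.cong refl)
    fix n
    define z where "z = - (lam / 8) * real n"
    have e1: "lam * real (n+1) + r * (n0 - real n) = lam + r * n0 + z"
      unfolding r_def z_def by (simp add: field_simps)
    have e2: "lam * real n + r * (n0 - real n) = r * n0 + z"
      unfolding r_def z_def by (simp add: field_simps)
    have "c n * exp (r * (n0 - real n)) = exp (lam * real (n+1)) * exp (r * (n0 - real n)) - exp (lam * real n) * exp (r * (n0 - real n))"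
      unfolding c_def by (rule left_diff_distrib)
    also have "\<dots> = exp (lam * real (n+1) + r * (n0 - real n)) - exp (lam * real n + r * (n0 - real n))"
      by (simp only: exp_add)
    also have "\<dots> = exp lam * exp (r * n0) * exp z - exp (r * n0) * exp z"
      unfolding e1 e2 by (simp only: exp_add)
    also have "\<dots> = (exp lam - 1) * exp (r * n0) * exp z"
      by (rule aux_factor)
    finally show "c n * exp (r * (n0 - real n)) = (exp lam - 1) * exp (r * n0) * exp (- (lam / 8) * real n)"
      unfolding z_def .
  qed
  also have "\<dots> = (exp lam - 1) * exp (r * n0) * (\<Sum>n\<in>{1..<N}. exp (- (lam / 8) * real n))"
    by (simp add: sum_distrib_left)
  also have "\<dots> \<le> (3 * lam) * exp (r * n0) * (1 / (lam / 8))"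
  proof (intro mult_mono)
    show "exp lam - 1 \<le> 3 * lam" using exp_minus_one_le3[of lam] lam0 lam1 by simp
    show "(\<Sum>n\<in>{1..<N}. exp (- (lam / 8) * real n)) \<le> 1 / (lam / 8)"
      using geom_exp_bound[of "lam / 8" N] lam0 by simp
  qed (use lam0 in \<open>auto intro!: sum_nonneg\<close>)
  also have "\<dots> = 24 * exp (r * n0)" using lam0 by (simp add: field_simps)
  finally have sumb: "(\<Sum>n\<in>{1..<N}. c n * prob (E n)) \<le> 24 * exp (r * n0)" .
  have el: "exp lam \<le> 3" using lam1 exp_le by (meson exp_le_cancel_iff order_trans)
  have ern: "exp (r * n0) \<ge> 1" using r0 n0p by simp
  have e5: "exp (5::real) \<ge> 27"
  proof -
    have "exp (5::real) = exp 1 ^ 5" using exp_of_nat_mult[of 5 "1::real"] by simp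
    moreover have "exp (1::real) \<ge> 2" using exp_ge_add_one_self[of "1::real"] by simp
    moreover have "(2::real) ^ 5 \<le> exp 1 ^ 5" using \<open>exp (1::real) \<ge> 2\<close> by (intro power_mono) auto
    ultimately have "exp (5::real) \<ge> 2 ^ 5" by simp
    thus ?thesis by simp
  qed
  have "expectation (\<lambda>\<omega>. exp (lam * tr \<omega>)) \<le> 3 + 24 * exp (r * n0)" using expE sumb el by linarith
  also have "\<dots> \<le> 27 * exp (r * n0)" using ern by simp
  also have "\<dots> \<le> exp 5 * exp (r * n0)" using e5 ern by (intro mult_right_mono) auto
  also have "\<dots> = exp (5 + r * n0)" by (simp add: exp_add)
  finally have mgf: "expectation (\<lambda>\<omega>. exp (lam * tr \<omega>)) \<le> exp (5 + r * n0)" .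
  have "expectation (\<lambda>\<omega>. exp (D\<^sup>2 * (real (tau Y th al C \<omega>) - B))) = expectation (\<lambda>\<omega>. exp (- lam * B) * exp (lam * tr \<omega>))"
    unfolding tr_def lam_def by (rule Bochner_Integration.integral_cong[OF refl]) (simp add: exp_add[symmetric] algebra_simps)
  also have "\<dots> = exp (- lam * B) * expectation (\<lambda>\<omega>. exp (lam * tr \<omega>))" by simp
  also have "\<dots> \<le> exp (- lam * B) * exp (5 + r * n0)" using mgf by (intro mult_left_mono) auto
  also have "\<dots> = exp (5 + r * n0 - lam * B)" by (simp add: exp_add[symmetric])
  also have "\<dots> \<le> exp (- 40 * k / al)"
  proof -
    have rn0: "r * n0 = 9/8 + 18 * (y - k) / al" unfolding r_def n0_def using lam0 al by (simp add: field_simps)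
    have lB: "lam * B = Mc * (y + al) / al" unfolding B_def lam_def using D al by (simp add: field_simps)
    have "Mc * (y + al) \<ge> 40 * (y + al)" using Mc k al by (intro mult_right_mono) auto
    hence "Mc * (y + al) / al \<ge> 40 * (y + al) / al" using al by (intro divide_right_mono) auto
    moreover have "40 * (y + al) / al = 40 * (y / al) + 40" using al by (simp add: field_simps)
    ultimately have a2: "Mc * (y + al) / al \<ge> 40 * (y / al) + 40" by simp
    have a1: "18 * (y - k) / al = 18 * (y / al) - 18 * (k / al)" using al by (simp add: field_simps)
    have a3: "k / al \<le> y / al" using k al by (intro divide_right_mono) auto
    have a4: "- 40 * k / al = - 40 * (k / al)" by simp
    have "5 + r * n0 - lam * B \<le> - 40 * k / al" unfolding rn0 lB a1 a4 using a2 a3 by linarith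
    thus ?thesis by simp
  qed
  finally show ?thesis unfolding B_def .
qed


lemma xi_meas:
  assumes "\<And>s. 1 \<le> s \<Longrightarrow> s \<le> t \<Longrightarrow> Y s \<in> borel_measurable M'"
  shows "(\<lambda>\<omega>. xi Y th al t \<omega>) \<in> borel_measurable M'"
proof -
  have [measurable]: "(\<lambda>\<omega>. \<Sum>s\<in>{1..t}. Y s \<omega>) \<in> borel_measurable M'"
    by (rule borel_measurable_sum) (use assms in auto)
  show ?thesis unfolding xi_def hatDelta_def by measurable
qed

lemma tau_meas_gen:
  assumes al: "al > 0" and N: "0 < N" "C < 0.5 * ln (real N)"
    and Ym: "\<And>s. 1 \<le> s \<Longrightarrow> s \<le> N \<Longrightarrow> Y s \<in> borel_measurable M'"
  shows "(\<lambda>\<omega>. real (tau Y th al C \<omega>)) \<in> borel_measurable M'"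
proof -
  have eq: "(\<lambda>\<omega>. real (tau Y th al C \<omega>)) =
     (\<lambda>\<omega>. \<Sum>n<N. if (\<forall>t\<in>{1..n}. xi Y th al t \<omega> \<le> C) then 1 else 0)"
    by (rule ext) (rule tau_sum_repr[OF al N])
  have "(\<lambda>\<omega>. \<Sum>n<N. if (\<forall>t\<in>{1..n}. xi Y th al t \<omega> \<le> C) then 1 else (0::real)) \<in> borel_measurable M'"
  proof (rule borel_measurable_sum)
    fix n assume n: "n \<in> {..<N}"
    have xm: "\<And>t. t \<in> {1..n} \<Longrightarrow> (\<lambda>\<omega>. xi Y th al t \<omega>) \<in> borel_measurable M'"
      using n by (intro xi_meas Ym) auto
    have "Measurable.pred M' (\<lambda>\<omega>. \<forall>t\<in>{1..n}. xi Y th al t \<omega> \<le> C)"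
    proof (rule pred_intros_finite(3))
      fix t assume "t \<in> {1..n}"
      note xm[OF this, measurable]
      show "Measurable.pred M' (\<lambda>\<omega>. xi Y th al t \<omega> \<le> C)" by measurable
    qed simp
    thus "(\<lambda>\<omega>. if (\<forall>t\<in>{1..n}. xi Y th al t \<omega> \<le> C) then 1 else (0::real)) \<in> borel_measurable M'"
      by (intro measurable_If) (auto simp: pred_def)
  qed
  thus ?thesis unfolding eq .
qed


lemma (in prob_space) indep_arm_seq:
  fixes X :: "nat \<Rightarrow> nat \<Rightarrow> 'a \<Rightarrow> real"
  assumes ind: "indep_vars (\<lambda>_. borel) (\<lambda>(i, s). X i s) ({..<K} \<times> {1..})" and i: "i < K"
  shows "indep_vars (\<lambda>_. borel) (X i) {1..n}"
proof -
  have r: "indep_vars (\<lambda>s. PiM {(i,s)} (\<lambda>_. borel)) (\<lambda>s \<omega>. restrict (\<lambda>p. (\<lambda>(i, s). X i s) p \<omega>) {(i,s)}) {1..n}"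
    by (rule indep_vars_restrict[OF ind]) (use i in \<open>auto simp: disjoint_family_on_def\<close>)
  have c: "indep_vars (\<lambda>_. borel) (\<lambda>s \<omega>. (\<lambda>f. f (i,s)) (restrict (\<lambda>p. (\<lambda>(i, s). X i s) p \<omega>) {(i,s)})) {1..n}"
    by (rule indep_vars_compose2[OF r]) (rule measurable_component_singleton, simp)
  show ?thesis
    by (rule indep_vars_cong[THEN iffD1, OF refl _ refl c]) (auto simp: fun_eq_iff)
qed

lemma (in prob_space) indep_arms:
  fixes X :: "nat \<Rightarrow> nat \<Rightarrow> 'a \<Rightarrow> real" and F :: "nat \<Rightarrow> real \<Rightarrow> real"
  assumes ind: "indep_vars (\<lambda>_. borel) (\<lambda>(i, s). X i s) ({..<K} \<times> {1..})"
    and al: "al > 0" and N: "0 < N" "C < 0.5 * ln (real N)"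
    and Fm: "\<And>i. F i \<in> borel_measurable borel"
  shows "indep_vars (\<lambda>_. borel) (\<lambda>i \<omega>. F i (real (tau (X i) th al C \<omega>))) {..<K}"
proof -
  define Kb where "Kb = (\<lambda>i::nat. {i} \<times> {1..N})"
  have r: "indep_vars (\<lambda>i. PiM (Kb i) (\<lambda>_. borel)) (\<lambda>i \<omega>. restrict (\<lambda>p. (\<lambda>(i, s). X i s) p \<omega>) (Kb i)) {..<K}"
    by (rule indep_vars_restrict[OF ind]) (auto simp: disjoint_family_on_def Kb_def)
  define G where "G = (\<lambda>i (f :: nat \<times> nat \<Rightarrow> real). F i (real (tau (\<lambda>s g. g (i,s)) th al C f)))"
  have Gm: "G i \<in> borel_measurable (PiM (Kb i) (\<lambda>_. borel))" for i
  proof -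
    have "(\<lambda>f. real (tau (\<lambda>s g. g (i,s)) th al C f)) \<in> borel_measurable (PiM (Kb i) (\<lambda>_. borel))"
      by (rule tau_meas_gen[OF al N]) (rule measurable_component_singleton, simp add: Kb_def)
    thus ?thesis unfolding G_def using Fm[of i] by (intro measurable_compose[where f="\<lambda>f. real (tau (\<lambda>s g. g (i,s)) th al C f)" and g="F i"]) auto
  qed
  have c: "indep_vars (\<lambda>_. borel) (\<lambda>i \<omega>. G i (restrict (\<lambda>p. (\<lambda>(i, s). X i s) p \<omega>) (Kb i))) {..<K}"
    by (rule indep_vars_compose2[OF r Gm])
  have eq: "G i (restrict (\<lambda>p. (\<lambda>(i, s). X i s) p \<omega>) (Kb i)) = F i (real (tau (X i) th al C \<omega>))" for i \<omega>
  proof -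
    have "tau (\<lambda>s g. g (i,s)) th al C (restrict (\<lambda>p. (\<lambda>(i, s). X i s) p \<omega>) (Kb i)) = tau (X i) th al C \<omega>"
      by (rule tau_cong[OF al N]) (simp add: Kb_def)
    thus ?thesis unfolding G_def by simp
  qed
  show ?thesis
    by (rule indep_vars_cong[THEN iffD1, OF refl _ refl c]) (simp add: eq)
qed


lemma exp_convex_le:
  fixes p a :: real assumes "0 \<le> p" "p \<le> 1"
  shows "exp (p * a) \<le> p * exp a + (1 - p)"
  using convex_onD[OF exp_convex, of p 0 a] assms by (simp add: algebra_simps)

lemma N_facts:
  fixes C :: real
  defines "N \<equiv> nat \<lceil>exp (2*C)\<rceil> + 1"
  shows "0 < N" "C < 0.5 * ln (real N)" "real N \<le> exp (2*C) + 2"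
proof -
  show "0 < N" unfolding N_def by simp
  have a1: "exp (2*C) \<le> real (nat \<lceil>exp (2*C)\<rceil>)" by (rule real_nat_ceiling_ge)
  have a2: "real N > exp (2*C)" using a1 unfolding N_def of_nat_add of_nat_1 by linarith
  show "C < 0.5 * ln (real N)" by (rule ln_gt_of_exp_lt[OF a2])
  have "real (nat \<lceil>exp (2*C)\<rceil>) = real_of_int \<lceil>exp (2*C)\<rceil>"
    by (metis exp_gt_zero ceiling_le_zero linorder_not_le of_nat_nat order_less_le)
  also have "\<dots> \<le> exp (2*C) + 1" using of_int_ceiling_le_add_one[of "exp (2*C)"] by linarith
  finally have h: "real (nat \<lceil>exp (2*C)\<rceil>) \<le> exp (2*C) + 1" .
  show "real N \<le> exp (2*C) + 2" unfolding N_def of_nat_add of_nat_1 using h by linarith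
qed

theorem lemma8:
  fixes M :: "'a measure" and X :: "nat \<Rightarrow> nat \<Rightarrow> 'a \<Rightarrow> real"
    and mu :: "nat \<Rightarrow> real" and th al k :: real and K T :: nat
  assumes "prob_space M"
    and "K \<ge> 2"
    and "\<And>i s. i < K \<Longrightarrow> s \<ge> 1 \<Longrightarrow> X i s \<in> borel_measurable M"
    and "\<And>i s \<omega>. i < K \<Longrightarrow> s \<ge> 1 \<Longrightarrow> \<omega> \<in> space M \<Longrightarrow> X i s \<omega> \<in> {0..1}"
    and "prob_space.indep_vars M (\<lambda>_. borel) (\<lambda>(i, s). X i s) ({..<K} \<times> {1..})"
    and "\<And>i s. i < K \<Longrightarrow> s \<ge> 1 \<Longrightarrow> distr M borel (X i s) = distr M borel (X i 1)"
    and "\<And>i. i < K \<Longrightarrow> prob_space.expectation M (X i 1) = mu i"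
    and "0 < th" and "th < 1"
    and "0 < al" and "al \<le> 8"
    and "real T \<ge> Mconst al * real K"
    and "0 \<le> k" and "k < Lambda al th mu K (real T)"
  shows "measure M {\<omega> \<in> space M.
            (\<Sum>i<K. tau (X i) th al (Lambda al th mu K (real T) - k) \<omega>) \<le> T}
         \<ge> 1 - exp (- 40 * k / al)"
proof -
  interpret P: prob_space M by (rule assms(1))
  have K0: "K > 0" using assms(2) by simp
  have al: "al > 0" using assms(10) .
  define Mc where "Mc = Mconst al"
  have Mc40: "Mc \<ge> 40" unfolding Mc_def Mconst_def by simp
  have Mcp: "Mc > 0" using Mc40 by simp
  define D where "D = (\<lambda>i. \<bar>mu i - th\<bar>)"
  have mu01: "0 \<le> mu i \<and> mu i \<le> 1" if "i < K" for i
  proof -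
    have m: "X i 1 \<in> borel_measurable M" using assms(3)[OF that] by simp
    have b: "\<And>\<omega>. \<omega> \<in> space M \<Longrightarrow> X i 1 \<omega> \<in> {0..1}" using assms(4)[OF that] by simp
    have int: "integrable M (X i 1)"
      using b m by (intro P.integrable_const_bound[where B=1]) (auto intro!: AE_I2)
    have "0 \<le> P.expectation (X i 1)" using b by (intro Bochner_Integration.integral_nonneg) auto
    moreover have "P.expectation (X i 1) \<le> P.expectation (\<lambda>_. 1)"
      using b int by (intro Bochner_Integration.integral_mono) auto
    ultimately show ?thesis using assms(7)[OF that] by (simp add: P.prob_space)
  qed
  have Dle: "D i \<le> 1" if "i < K" for i using mu01[OF that] assms(8,9) unfolding D_def by auto
  have D0: "D i \<ge> 0" for i unfolding D_def by simp
  have TK: "real K \<le> real T / Mc" using assms(12) Mcp unfolding Mc_def[symmetric] by (simp add: field_simps)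
  define Lam where "Lam = Lambda al th mu K (real T)"
  have LP: "0 \<le> Lam \<and> (\<Sum>i<K. gfun al (D i) Lam) = real T / Mc"
    unfolding Lam_def D_def Mc_def
    by (rule Lambda_prop[OF al assms(11) K0]) (use Dle TK in \<open>auto simp: D_def Mc_def\<close>)
  define C where "C = Lam - k"
  define B where "B = (\<lambda>i. Mc * gfun al (D i) Lam)"
  have sumB: "(\<Sum>i<K. B i) = real T" unfolding B_def using LP Mcp by (simp add: sum_distrib_left[symmetric])
  define N where "N = nat \<lceil>exp (2*C)\<rceil> + 1"
  have N0: "0 < N" and NC: "C < 0.5 * ln (real N)" and Nle: "real N \<le> exp (2*C) + 2"
    unfolding N_def by (rule N_facts)+
  define tr where "tr = (\<lambda>i \<omega>. real (tau (X i) th al C \<omega>))"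
  have taule: "tau (X i) th al C \<omega> \<le> N" for i \<omega> by (rule tau_le[OF al N0 NC])
  have trle: "tr i \<omega> \<le> real N" for i \<omega> unfolding tr_def using taule[of i \<omega>] by simp
  have trm: "tr i \<in> borel_measurable M" if "i < K" for i
    unfolding tr_def by (rule tau_meas_gen[OF al N0 NC]) (rule assms(3)[OF that], simp)
  define S where "S = {i\<in>{..<K}. D i \<noteq> 0 \<and> \<not> Lam \<le> ln (1 / D i) \<and> k < Lam - ln (1 / D i)}"
  have Bpos: "B i > 0" for i unfolding B_def using Mcp gfun_pos[OF al D0] by simp
  have nonS: "real N \<le> B i" if "i < K" "i \<notin> S" for i
  proof (cases "D i = 0 \<or> Lam \<le> ln (1 / D i)")
    case True
    have g: "gfun al (D i) Lam = exp (2 * Lam)" by (rule gfun_exp[OF True])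
    have "exp (2*C) \<le> exp (2*Lam)" unfolding C_def using assms(13) by simp
    moreover have "exp (2*Lam) \<ge> 1" using LP by simp
    ultimately have "real N \<le> 3 * exp (2 * Lam)" using Nle by linarith
    also have "\<dots> \<le> Mc * exp (2*Lam)" using Mc40 by (intro mult_right_mono) auto
    finally show ?thesis unfolding B_def g .
  next
    case False
    hence Dp: "D i > 0" and nl: "\<not> Lam \<le> ln (1 / D i)" using D0[of i] by auto
    hence kk: "k \<ge> Lam - ln (1 / D i)" using that unfolding S_def by auto
    define L where "L = ln (1 / D i)"
    have g: "gfun al (D i) Lam = (Lam - L + al) / (al * (D i)\<^sup>2)" unfolding L_def by (rule gfun_lin[OF Dp nl])
    have eL: "exp (2*L) = 1 / (D i)\<^sup>2" unfolding L_def by (rule exp_two_ln_inv[OF Dp])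
    have "C \<le> L" using kk unfolding C_def L_def by simp
    hence "exp (2*C) \<le> exp (2*L)" by simp
    hence "exp (2*C) \<le> 1 / (D i)\<^sup>2" unfolding eL .
    moreover have "(D i)\<^sup>2 \<le> 1" using Dp Dle[OF that(1)] by (intro power_le_one) auto
    hence "1 / (D i)\<^sup>2 \<ge> 1" using Dp by (simp add: field_simps)
    ultimately have "real N \<le> 3 * (1 / (D i)\<^sup>2)" using Nle by linarith
    also have "\<dots> \<le> Mc * (1 / (D i)\<^sup>2)" using Mc40 Dp by (intro mult_right_mono) auto
    also have "\<dots> \<le> Mc * ((Lam - L + al) / (al * (D i)\<^sup>2))"
    proof (intro mult_left_mono)
      have "Lam - L \<ge> 0" using nl unfolding L_def by simp
      thus "1 / (D i)\<^sup>2 \<le> (Lam - L + al) / (al * (D i)\<^sup>2)" using al Dp by (simp add: field_simps)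
    qed (use Mcp in simp)
    finally show ?thesis unfolding B_def g .
  qed
  define F where "F = {\<omega>\<in>space M. real T < (\<Sum>i<K. tr i \<omega>)}"
  have sm[measurable]: "(\<lambda>\<omega>. \<Sum>i<K. tr i \<omega>) \<in> borel_measurable M"
    by (rule borel_measurable_sum) (use trm in auto)
  have Fm: "F \<in> P.events" unfolding F_def by measurable
  have goal_set: "{\<omega> \<in> space M. (\<Sum>i<K. tau (X i) th al (Lambda al th mu K (real T) - k) \<omega>) \<le> T} = space M - F"
  proof -
    have "(\<Sum>i<K. tau (X i) th al (Lambda al th mu K (real T) - k) \<omega>) \<le> T \<longleftrightarrow> \<not> real T < (\<Sum>i<K. tr i \<omega>)" for \<omega>
    proof -
      have "(\<Sum>i<K. tr i \<omega>) = real (\<Sum>i<K. tau (X i) th al (Lambda al th mu K (real T) - k) \<omega>)"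
        unfolding tr_def C_def Lam_def by simp
      thus ?thesis by (simp only: of_nat_less_iff not_less)
    qed
    thus ?thesis unfolding F_def by auto
  qed
  have meq: "measure M (space M - F) = 1 - P.prob F" by (rule P.prob_compl[OF Fm])
  show ?thesis
  proof (cases "S = {}")
    case True
    have "F = {}"
    proof -
      have "(\<Sum>i<K. tr i \<omega>) \<le> real T" for \<omega>
      proof -
        have "(\<Sum>i<K. tr i \<omega>) \<le> (\<Sum>i<K. B i)"
        proof (intro sum_mono)
          fix i assume "i \<in> {..<K}"
          thus "tr i \<omega> \<le> B i" using True nonS[of i] trle[of i \<omega>] by auto
        qed
        thus ?thesis using sumB by simp
      qed
      thus ?thesis unfolding F_def by (auto simp: not_less)
    qed
    hence "measure M (space M - F) = 1" using meq by simp
    thus ?thesis unfolding goal_set by simp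
  next
    case False
    have finS: "finite S" unfolding S_def by simp
    define m where "m = Min (D ` S)"
    have "m \<in> D ` S" unfolding m_def using finS False by (intro Min_in) auto
    then obtain j where jS: "j \<in> S" and jm: "D j = m" by auto
    have jmin: "D j \<le> D i" if "i \<in> S" for i unfolding jm m_def using finS that by (intro Min_le) auto
    have SK: "i < K \<and> D i > 0 \<and> \<not> Lam \<le> ln (1 / D i) \<and> k < Lam - ln (1 / D i)" if "i \<in> S" for i
      using that D0[of i] unfolding S_def by auto
    define lam where "lam = (D j)\<^sup>2"
    have lam0: "lam > 0" using SK[OF jS] unfolding lam_def by simp
    define Z where "Z = (\<lambda>i \<omega>. exp (lam * (tr i \<omega> - B i)))"
    define rho where "rho = exp (- 40 * k / al)"
    have rho1: "rho \<le> 1" unfolding rho_def using assms(13) al by simp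
    have Zind: "P.indep_vars (\<lambda>_. borel) Z {..<K}"
    proof -
      have "P.indep_vars (\<lambda>_. borel) (\<lambda>i \<omega>. (\<lambda>x. exp (lam * (x - B i))) (real (tau (X i) th al C \<omega>))) {..<K}"
        by (rule P.indep_arms[OF assms(5) al N0 NC]) measurable
      thus ?thesis unfolding Z_def tr_def by simp
    qed
    have Zm: "Z i \<in> borel_measurable M" if "i < K" for i unfolding Z_def using trm[OF that] by measurable
    have Zpos: "0 \<le> Z i \<omega>" for i \<omega> unfolding Z_def by simp
    have Zbnd: "Z i \<omega> \<le> exp (lam * real N)" for i \<omega>
    proof -
      have "tr i \<omega> - B i \<le> real N" using trle[of i \<omega>] Bpos[of i] by linarith
      hence "lam * (tr i \<omega> - B i) \<le> lam * real N" using lam0 by (intro mult_left_mono) auto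
      thus ?thesis unfolding Z_def by simp
    qed
    have Zint: "integrable M (Z i)" if "i < K" for i
      using Zm[OF that] Zpos Zbnd by (intro P.integrable_const_bound[where B="exp (lam * real N)"]) (auto intro!: AE_I2)
    have EZ0: "0 \<le> P.expectation (Z i)" for i using Zpos by (intro Bochner_Integration.integral_nonneg) auto
    have armS: "P.expectation (\<lambda>\<omega>. exp ((D i)\<^sup>2 * (tr i \<omega> - B i))) \<le> rho" if "i \<in> S" for i
    proof -
      from SK[OF that] have iK: "i < K" and Dp: "D i > 0" and nl: "\<not> Lam \<le> ln (1 / D i)"
        and kl: "k < Lam - ln (1 / D i)" by auto
      define y where "y = Lam - ln (1 / D i)"
      have Bi: "B i = Mc * (y + al) / (al * (D i)\<^sup>2)" unfolding B_def y_def gfun_lin[OF Dp nl] by simp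
      have mi: "\<And>s. s \<ge> 1 \<Longrightarrow> X i s \<in> borel_measurable M" using assms(3)[OF iK] .
      have bi: "\<And>s \<omega>. s \<ge> 1 \<Longrightarrow> \<omega> \<in> space M \<Longrightarrow> X i s \<omega> \<in> {0..1}" using assms(4)[OF iK] .
      have ii: "\<And>n. P.indep_vars (\<lambda>_. borel) (X i) {1..n}" using P.indep_arm_seq[OF assms(5) iK] .
      have di: "\<And>s. s \<ge> 1 \<Longrightarrow> distr M borel (X i s) = distr M borel (X i 1)" using assms(6)[OF iK] .
      have ei: "P.expectation (X i 1) = mu i" using assms(7)[OF iK] .
      have Di: "D i = \<bar>mu i - th\<bar>" unfolding D_def ..
      have ti: "(\<lambda>\<omega>. real (tau (X i) th al C \<omega>)) \<in> borel_measurable M" using trm[OF iK] unfolding tr_def .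
      have ky: "0 \<le> k" "k \<le> y" using assms(13) kl unfolding y_def by auto
      have Cy: "C = ln (1 / D i) + y - k" unfolding C_def y_def by simp
      have "P.expectation (\<lambda>\<omega>. exp ((D i)\<^sup>2 * (real (tau (X i) th al C \<omega>) - Mc * (y + al) / (al * (D i)\<^sup>2)))) \<le> exp (- 40 * k / al)"
        by (rule P.arm_mgf[OF mi bi ii di ei al Di Dp Dle[OF iK] ti N0 NC ky Cy Mc40])
      thus ?thesis unfolding tr_def Bi rho_def .
    qed
    have intA: "integrable M (\<lambda>\<omega>. exp ((D i)\<^sup>2 * (tr i \<omega> - B i)))" if "i < K" for i
    proof -
      have b: "exp ((D i)\<^sup>2 * (tr i \<omega> - B i)) \<le> exp ((D i)\<^sup>2 * real N)" for \<omega>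
      proof -
        have "tr i \<omega> - B i \<le> real N" using trle[of i \<omega>] Bpos[of i] by linarith
        hence "(D i)\<^sup>2 * (tr i \<omega> - B i) \<le> (D i)\<^sup>2 * real N" by (intro mult_left_mono) auto
        thus ?thesis by simp
      qed
      show ?thesis using trm[OF that] b
        by (intro P.integrable_const_bound[where B="exp ((D i)\<^sup>2 * real N)"]) (auto intro!: AE_I2)
    qed
    have EZle: "P.expectation (Z i) \<le> 1" if iK: "i < K" for i
    proof (cases "i \<in> S")
      case True
      define p where "p = lam / (D i)\<^sup>2"
      have Dp: "D i > 0" using SK[OF True] by auto
      have "(D j)\<^sup>2 \<le> (D i)\<^sup>2" using jmin[OF True] D0[of j] by (intro power_mono) auto
      hence p01: "0 \<le> p" "p \<le> 1" unfolding p_def lam_def using Dp by (auto simp: divide_le_eq_1)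
      have Zle: "Z i \<omega> \<le> p * exp ((D i)\<^sup>2 * (tr i \<omega> - B i)) + (1 - p)" for \<omega>
      proof -
        have "lam * (tr i \<omega> - B i) = p * ((D i)\<^sup>2 * (tr i \<omega> - B i))" unfolding p_def using Dp by (simp add: field_simps)
        hence "Z i \<omega> = exp (p * ((D i)\<^sup>2 * (tr i \<omega> - B i)))" unfolding Z_def by simp
        thus ?thesis using exp_convex_le[OF p01] by simp
      qed
      have "P.expectation (Z i) \<le> P.expectation (\<lambda>\<omega>. p * exp ((D i)\<^sup>2 * (tr i \<omega> - B i)) + (1 - p))"
        by (intro Bochner_Integration.integral_mono Zint[OF iK] Bochner_Integration.integrable_add
              integrable_mult_right intA[OF iK] P.integrable_const) (use Zle in auto)
      also have "\<dots> = p * P.expectation (\<lambda>\<omega>. exp ((D i)\<^sup>2 * (tr i \<omega> - B i))) + (1 - p)"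
        by (subst Bochner_Integration.integral_add) (auto intro: intA[OF iK] P.integrable_const simp: P.prob_space)
      also have "\<dots> \<le> p * rho + (1 - p)" using armS[OF True] p01 by (intro add_right_mono mult_left_mono) auto
      also have "\<dots> \<le> 1" using p01 rho1 by (simp add: algebra_simps mult_left_le)
      finally show ?thesis .
    next
      case False
      have z1: "Z i \<omega> \<le> 1" for \<omega>
      proof -
        have "tr i \<omega> - B i \<le> 0" using trle[of i \<omega>] nonS[OF iK False] by linarith
        hence "lam * (tr i \<omega> - B i) \<le> 0" using lam0 by (simp add: mult_nonneg_nonpos)
        thus ?thesis unfolding Z_def by simp
      qed
      have "P.expectation (Z i) \<le> P.expectation (\<lambda>_. 1)"
        by (intro Bochner_Integration.integral_mono Zint[OF iK] P.integrable_const) (use z1 in auto)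
      thus ?thesis by (simp add: P.prob_space)
    qed
    have EZj: "P.expectation (Z j) \<le> rho"
    proof -
      have "Z j = (\<lambda>\<omega>. exp ((D j)\<^sup>2 * (tr j \<omega> - B j)))" unfolding Z_def lam_def ..
      thus ?thesis using armS[OF jS] by simp
    qed
    have jK: "j < K" using SK[OF jS] by simp
    have prodE: "(\<Prod>i<K. P.expectation (Z i)) \<le> rho"
    proof -
      have "(\<Prod>i<K. P.expectation (Z i)) = P.expectation (Z j) * (\<Prod>i\<in>{..<K} - {j}. P.expectation (Z i))"
        using jK by (subst prod.remove[of "{..<K}" j]) auto
      also have "\<dots> \<le> P.expectation (Z j) * 1" using EZ0 EZle by (intro mult_left_mono prod_le_1) auto
      also have "\<dots> \<le> rho" using EZj by simp
      finally show ?thesis .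
    qed
    have intP: "integrable M (\<lambda>\<omega>. \<Prod>i<K. Z i \<omega>)" using Zind Zint by (intro P.indep_vars_integrable) auto
    have markov: "P.prob F \<le> P.expectation (\<lambda>\<omega>. \<Prod>i<K. Z i \<omega>)"
    proof -
      have Fs: "F \<inter> space M = F" unfolding F_def by auto
      have "P.prob F = P.expectation (indicator F)" using Fs by simp
      also have "\<dots> \<le> P.expectation (\<lambda>\<omega>. \<Prod>i<K. Z i \<omega>)"
      proof (rule Bochner_Integration.integral_mono)
        show "integrable M (indicator F :: _ \<Rightarrow> real)"
          using Fm by (intro integrable_real_indicator) (auto simp: P.emeasure_eq_measure)
        show "integrable M (\<lambda>\<omega>. \<Prod>i<K. Z i \<omega>)" by (rule intP)
        fix \<omega> assume \<omega>: "\<omega> \<in> space M"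
        show "indicator F \<omega> \<le> (\<Prod>i<K. Z i \<omega>)"
        proof (cases "\<omega> \<in> F")
          case True
          hence "real T < (\<Sum>i<K. tr i \<omega>)" unfolding F_def by simp
          hence "0 \<le> lam * ((\<Sum>i<K. tr i \<omega>) - (\<Sum>i<K. B i))" using sumB lam0 by simp
          also have "lam * ((\<Sum>i<K. tr i \<omega>) - (\<Sum>i<K. B i)) = (\<Sum>i<K. lam * (tr i \<omega> - B i))"
            by (simp only: sum_distrib_left[symmetric] sum_subtractf)
          finally have "1 \<le> exp (\<Sum>i<K. lam * (tr i \<omega> - B i))" by simp
          also have "\<dots> = (\<Prod>i<K. Z i \<omega>)" unfolding Z_def by (simp add: exp_sum)
          finally show ?thesis using True by simp
        next
          case False thus ?thesis using Zpos by (simp add: prod_nonneg)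
        qed
      qed
      finally show ?thesis .
    qed
    have "P.expectation (\<lambda>\<omega>. \<Prod>i<K. Z i \<omega>) = (\<Prod>i<K. P.expectation (Z i))"
      using Zind Zint by (intro P.indep_vars_lebesgue_integral) auto
    hence "P.prob F \<le> rho" using markov prodE by simp
    thus ?thesis unfolding goal_set meq rho_def by simp
  qed
qed


end
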